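(* Let $N=2^n$ and $i,j\in[0,N)$ with $i<j$. Then every $\mathbf{x}\in C^{(n)}(i,j):=\mathbf{g}_i+\mathbf{g}_j+\langle\mathbf{g}_{j+1},\ldots,\mathbf{g}_{N-1}\rangle$ satisfies $\mathrm{w}(\mathbf{x})\ge\mathrm{w}(\mathbf{g}_i+\mathbf{g}_j)$, and $$\mathrm{w}(\mathbf{g}_i+\mathbf{g}_j)=\mathrm{w}(\mathbf{g}_i)+\mathrm{w}(\mathbf{g}_j)-2^{t_{i,j}+1},\qquad t_{i,j}:=\sum_{k=0}^{n-1}b_k(i)b_k(j).$$
   Context: All vectors are binary (over $GF(2)$), indices are zero-based, $\mathrm{w}(\cdot)$ is Hamming weight and $\langle\cdot\rangle$ denotes linear span over $GF(2)$. Let $G_N=\begin{pmatrix}1&0\\1&1\end{pmatrix}^{\otimes n}$ for $N=2^n$, with rows $\mathbf{g}_0,\ldots,\mathbf{g}_{N-1}$. For $k\in[0,N)$, $b_r(k)$ denotes the $r$-th bit of $k$, i.e. $k=\sum_{r=0}^{n-1}b_r(k)2^r$. *)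

theory Defs
  imports Main "HOL-Library.Z2"
begin

text \<open>Binary vectors of length N are functions nat => bit (coordinates c < N matter).\<close>

text \<open>Kernel matrix F = [[1,0],[1,1]].\<close>
definition kernF :: "nat \<Rightarrow> nat \<Rightarrow> bit" where
  "kernF a b = (if a < 2 \<and> b < 2 \<and> b \<le> a then 1 else 0)"

text \<open>G n r c is entry (r,c) of the n-fold Kronecker power of F, via
  (F \<otimes> G_m)[r,c] = F[r div m, c div m] * G_m[r mod m, c mod m].\<close>
fun polarG :: "nat \<Rightarrow> nat \<Rightarrow> nat \<Rightarrow> bit" where
  "polarG 0 r c = (if r = 0 \<and> c = 0 then 1 else 0)"
| "polarG (Suc n) r c =
     kernF (r div 2^n) (c div 2^n) * polarG n (r mod 2^n) (c mod 2^n)"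

definition grow :: "nat \<Rightarrow> nat \<Rightarrow> (nat \<Rightarrow> bit)" where
  "grow n r = (\<lambda>c. polarG n r c)"

definition hw :: "nat \<Rightarrow> (nat \<Rightarrow> bit) \<Rightarrow> nat" where
  "hw n x = card {c. c < 2^n \<and> x c \<noteq> 0}"

definition gf2_span :: "(nat \<Rightarrow> (nat \<Rightarrow> bit)) \<Rightarrow> nat set \<Rightarrow> (nat \<Rightarrow> bit) set" where
  "gf2_span v I = {(\<lambda>c. \<Sum>k\<in>I. a k * v k c) | a. True}"

definition cosetC :: "nat \<Rightarrow> nat \<Rightarrow> nat \<Rightarrow> (nat \<Rightarrow> bit) set" where
  "cosetC n i j = {(\<lambda>c. grow n i c + grow n j c + y c) | y. y \<in> gf2_span (grow n) {j+1..<2^n}}"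

definition bitk :: "nat \<Rightarrow> nat \<Rightarrow> nat" where
  "bitk r k = (k div 2^r) mod 2"

definition tij :: "nat \<Rightarrow> nat \<Rightarrow> nat \<Rightarrow> nat" where
  "tij n i j = (\<Sum>k<n. bitk k i * bitk k j)"

end

theory Submission imports Defs begin
declare add_bit_eq_xor[simp del] mult_bit_eq_and[simp del]

lemma bitk_mod: "k < n \<Longrightarrow> bitk k (i mod 2^n) = bitk k i"
proof -
  assume "k < n"
  have "bit (i mod 2^n) k = bit i k" using \<open>k<n\<close> by (simp add: bit_take_bit_iff flip: take_bit_eq_mod)
  thus ?thesis unfolding bitk_def by (simp add: bit_iff_odd mod2_eq_if)
qed

lemma sum_split: "(\<Sum>c<a+(b::nat). f c) = (\<Sum>c<a. f c) + (\<Sum>c<b. f (c+a))"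
  by (induction b) (simp_all add: add.commute add.left_commute)

lemma card_sum: "card {c. c < (N::nat) \<and> P c} = (\<Sum>c<N. of_bool (P c))"
proof (induction N)
  case 0 then show ?case by simp
next
  case (Suc N)
  have "{c. c < Suc N \<and> P c} = (if P N then insert N {c. c < N \<and> P c} else {c. c < N \<and> P c})"
    by (auto simp: less_Suc_eq)
  then show ?case using Suc by auto
qed

lemma polarG_zero: "2^n \<le> r \<or> 2^n \<le> c \<Longrightarrow> polarG n r c = 0"
proof (induction n arbitrary: r c)
  case 0 then show ?case by auto
next
  case (Suc n)
  show ?case
  proof (cases "2 * 2^n \<le> r")
    case True
    then have "r div 2^n \<ge> 2" by (metis div_le_mono nonzero_mult_div_cancel_right power_not_zero zero_neq_numeral)
    then show ?thesis by (simp add: kernF_def)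
  next
    case False
    then have "2*2^n \<le> c" using Suc.prems by simp
    then have "c div 2^n \<ge> 2" by (metis div_le_mono nonzero_mult_div_cancel_right power_not_zero zero_neq_numeral)
    then show ?thesis by (simp add: kernF_def)
  qed
qed

lemma polarG_low: "c < 2^n \<Longrightarrow> polarG (Suc n) r c = polarG n (if r < 2*2^n then r mod 2^n else 2^n) c"
proof -
  assume c: "c < 2^n"
  show ?thesis
  proof (cases "r < 2*2^n")
    case True
    then have "r div 2^n < 2" by (simp add: less_mult_imp_div_less)
    then show ?thesis using c True by (simp add: kernF_def)
  next
    case False
    then have "r div 2^n \<ge> 2" by (metis div_le_mono nonzero_mult_div_cancel_right power_not_zero zero_neq_numeral not_less)
    then show ?thesis using c False by (simp add: kernF_def polarG_zero)
  qed
qed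

lemma polarG_high: "c < 2^n \<Longrightarrow> polarG (Suc n) r (c + 2^n) = polarG n (if 2^n \<le> r then r - 2^n else 2^n) c"
proof -
  assume c: "c < 2^n"
  have cd: "(c + 2^n) div 2^n = 1" "(c+2^n) mod 2^n = c" using c by (simp_all add: div_add_self2)
  show ?thesis
  proof (cases "2^n \<le> r")
    case True
    show ?thesis
    proof (cases "r < 2*2^n")
      case True2: True
      then have "r div 2^n = 1" using True by (simp add: div_nat_eqI)
      moreover have "r mod 2^n = r - 2^n" using True True2 by (simp add: le_mod_geq)
      ultimately show ?thesis using cd True by (simp add: kernF_def)
    next
      case False
      then have "r div 2^n \<ge> 2" by (metis div_le_mono nonzero_mult_div_cancel_right power_not_zero zero_neq_numeral not_less)
      then have "polarG n (r - 2^n) c = 0" using False by (intro polarG_zero) linarith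
      then show ?thesis using cd True False \<open>r div 2^n \<ge> 2\<close> by (simp add: kernF_def)
    qed
  next
    case False
    then have "r div 2^n = 0" by simp
    then show ?thesis using cd False by (simp add: kernF_def polarG_zero)
  qed
qed

lemma sum_ivl_shift: "(\<Sum>k\<in>{m..<m+(b::nat)}. f k) = (\<Sum>k<b. f(k+m))"
  by (induction b) (simp_all add: add.commute)

lemma sum_gt_shift: "(m::nat) \<le> j \<Longrightarrow> (\<Sum>k\<in>{j<..<m+b}. f k) = (\<Sum>k\<in>{j-m<..<b}. f (k+m))"
  by (rule sum.reindex_bij_witness[of _ "\<lambda>k. k+m" "\<lambda>k. k - m"]) auto

lemma sum_gt_split: "(j::nat) < m \<Longrightarrow> (\<Sum>k\<in>{j<..<m+m}. f k) = (\<Sum>k\<in>{j<..<m}. f k) + (\<Sum>k<m. f (k+m))"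
proof -
  assume "j < m"
  then have "{j<..<m+m} = {j<..<m} \<union> {m..<m+m}" by auto
  then have "(\<Sum>k\<in>{j<..<m+m}. f k) = (\<Sum>k\<in>{j<..<m}. f k) + (\<Sum>k\<in>{m..<m+m}. f k)"
    by (simp add: sum.union_disjoint ivl_disj_int)
  then show ?thesis by (simp add: sum_ivl_shift)
qed

lemma grow_zero: "2^n \<le> r \<or> 2^n \<le> c \<Longrightarrow> grow n r c = 0"
  by (simp add: grow_def polarG_zero)
lemma grow_low: "c < 2^n \<Longrightarrow> grow (Suc n) r c = grow n (if r < 2*2^n then r mod 2^n else 2^n) c"
  by (simp only: grow_def polarG_low)
lemma grow_high: "c < 2^n \<Longrightarrow> grow (Suc n) r (c + 2^n) = grow n (if 2^n \<le> r then r - 2^n else 2^n) c"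
  by (simp only: grow_def polarG_high)

definition LL :: "nat \<Rightarrow> nat \<Rightarrow> (nat \<Rightarrow> bit) \<Rightarrow> nat \<Rightarrow> bit" where
  "LL n j a = (\<lambda>c. grow n j c + (\<Sum>k\<in>{j<..<2^n}. a k * grow n k c))"

definition TT :: "nat \<Rightarrow> (nat \<Rightarrow> bit) \<Rightarrow> nat \<Rightarrow> bit" where
  "TT n a = (\<lambda>c. \<Sum>k<2^n. a (k+2^n) * grow n k c)"

lemma D1a: assumes "j < 2^n" "c < 2^n"
  shows "LL (Suc n) j a c = LL n j a c + TT n a c"
proof -
  let ?m = "2^n::nat"
  have p: "(2::nat)^Suc n = ?m + ?m" by simp
  have "(\<Sum>k\<in>{j<..<2^Suc n}. a k * grow (Suc n) k c)
      = (\<Sum>k\<in>{j<..<?m}. a k * grow (Suc n) k c) + (\<Sum>k<?m. a (k+?m) * grow (Suc n) (k+?m) c)"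
    unfolding p using assms(1) by (rule sum_gt_split)
  also have "(\<Sum>k\<in>{j<..<?m}. a k * grow (Suc n) k c) = (\<Sum>k\<in>{j<..<?m}. a k * grow n k c)"
    by (rule sum.cong) (auto simp: grow_low assms(2))
  also have "(\<Sum>k<?m. a (k+?m) * grow (Suc n) (k+?m) c) = TT n a c"
    unfolding TT_def by (rule sum.cong) (auto simp: grow_low assms(2))
  finally have f1: "(\<Sum>k\<in>{j<..<2^Suc n}. a k * grow (Suc n) k c) = (\<Sum>k\<in>{j<..<?m}. a k * grow n k c) + TT n a c" .
  have f2: "grow (Suc n) j c = grow n j c" using assms by (simp add: grow_low)
  show ?thesis unfolding LL_def f1 f2 by (simp only: add.assoc)
qed

lemma D1b: assumes "j < 2^n" "c < 2^n"
  shows "LL (Suc n) j a (c + 2^n) = TT n a c"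
proof -
  let ?m = "2^n::nat"
  have p: "(2::nat)^Suc n = ?m + ?m" by simp
  have "(\<Sum>k\<in>{j<..<2^Suc n}. a k * grow (Suc n) k (c+?m))
      = (\<Sum>k\<in>{j<..<?m}. a k * grow (Suc n) k (c+?m)) + (\<Sum>k<?m. a (k+?m) * grow (Suc n) (k+?m) (c+?m))"
    unfolding p using assms(1) by (rule sum_gt_split)
  also have "(\<Sum>k\<in>{j<..<?m}. a k * grow (Suc n) k (c+?m)) = 0"
    by (rule sum.neutral) (auto simp: grow_high assms(2) grow_zero)
  also have "(\<Sum>k<?m. a (k+?m) * grow (Suc n) (k+?m) (c+?m)) = TT n a c"
    unfolding TT_def by (rule sum.cong) (auto simp: grow_high assms(2))
  finally show ?thesis using assms unfolding LL_def by (simp add: grow_high grow_zero)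
qed

lemma D2: assumes "2^n \<le> j" "j < 2^Suc n" "c < 2^n"
  shows "LL (Suc n) j a c = LL n (j - 2^n) (\<lambda>k. a (k+2^n)) c"
    and "LL (Suc n) j a (c + 2^n) = LL n (j - 2^n) (\<lambda>k. a (k+2^n)) c"
proof -
  let ?m = "2^n::nat"
  have p: "(2::nat)^Suc n = ?m + ?m" by simp
  have s: "(\<Sum>k\<in>{j<..<2^Suc n}. f k) = (\<Sum>k\<in>{j-?m<..<?m}. f (k+?m))" for f :: "nat \<Rightarrow> bit"
    unfolding p using assms(1) by (rule sum_gt_shift)
  have jm: "j mod ?m = j - ?m" using assms by (simp add: le_mod_geq)
  show "LL (Suc n) j a c = LL n (j - 2^n) (\<lambda>k. a (k+2^n)) c"
    unfolding LL_def s using assms jm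
    by (intro arg_cong2[where f="(+)"] sum.cong) (simp_all add: grow_low)
  show "LL (Suc n) j a (c + 2^n) = LL n (j - 2^n) (\<lambda>k. a (k+2^n)) c"
    unfolding LL_def s using assms
    by (intro arg_cong2[where f="(+)"] sum.cong) (simp_all add: grow_high)
qed

definition wm :: "nat \<Rightarrow> (nat \<Rightarrow> bit) \<Rightarrow> (nat \<Rightarrow> bit) \<Rightarrow> nat" where
  "wm n h v = (\<Sum>c<2^n. of_bool (v c \<noteq> 0 \<and> h c = 0))"

definition ww :: "nat \<Rightarrow> (nat \<Rightarrow> bit) \<Rightarrow> nat" where
  "ww n v = (\<Sum>c<2^n. of_bool (v c \<noteq> 0))"

lemma wm_split: "wm (Suc n) h v = wm n h v + wm n (\<lambda>c. h (c+2^n)) (\<lambda>c. v (c+2^n))"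
proof -
  have p: "(2::nat)^Suc n = 2^n + 2^n" by simp
  show ?thesis unfolding wm_def p sum_split by simp
qed

lemma ww_split: "ww (Suc n) v = ww n v + ww n (\<lambda>c. v (c+2^n))"
proof -
  have p: "(2::nat)^Suc n = 2^n + 2^n" by simp
  show ?thesis unfolding ww_def p sum_split by simp
qed

lemma wm_cong: "(\<And>c. c < 2^n \<Longrightarrow> h c = h' c \<and> v c = v' c) \<Longrightarrow> wm n h v = wm n h' v'"
  unfolding wm_def by (rule sum.cong) auto

lemma ww_cong: "(\<And>c. c < 2^n \<Longrightarrow> v c = v' c) \<Longrightarrow> ww n v = ww n v'"
  unfolding ww_def by (rule sum.cong) auto

definition iL :: "nat \<Rightarrow> nat \<Rightarrow> nat" where "iL n i = (if i < 2*2^n then i mod 2^n else 2^n)"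
definition iU :: "nat \<Rightarrow> nat \<Rightarrow> nat" where "iU n i = (if 2^n \<le> i then i - 2^n else 2^n)"

lemma mask_sub: "c < 2^n \<Longrightarrow> grow n (iL n i) c = 0 \<Longrightarrow> grow n (iU n i) c = 0"
proof -
  assume c: "c < 2^n" and h: "grow n (iL n i) c = 0"
  consider "i < 2^n" | "2^n \<le> i \<and> i < 2*2^n" | "2*2^n \<le> i" by linarith
  then show ?thesis
  proof cases
    case 1 then show ?thesis by (simp add: iU_def grow_zero)
  next
    case 2
    then have "i - 2^n < 2^n" by linarith
    then have "iL n i = iU n i" using 2 by (simp add: iL_def iU_def le_mod_geq)
    then show ?thesis using h by simp
  next
    case 3
    then have "2^n \<le> i - 2^n" by linarith
    then show ?thesis using 3 by (simp add: iU_def grow_zero)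
  qed
qed

lemma wm_mask: "wm (Suc n) (grow (Suc n) i) v = wm n (grow n (iL n i)) v + wm n (grow n (iU n i)) (\<lambda>c. v (c+2^n))"
  unfolding wm_split
  by (intro arg_cong2[where f="(+)"] wm_cong) (simp_all add: grow_low grow_high iL_def iU_def)

lemma bitpt1: "of_bool (u \<noteq> 0 \<and> hl = 0) \<le> of_bool ((u + t) \<noteq> 0 \<and> hl = 0) + (of_bool (t \<noteq> 0 \<and> hu = 0) :: nat)"
  if "hl = 0 \<Longrightarrow> hu = 0" for u t hl hu :: bit
  using that by (cases u; cases t; cases hl; cases hu) auto

lemma W: "j < 2^n \<Longrightarrow> wm n (grow n i) (grow n j) \<le> wm n (grow n i) (LL n j a)"
proof (induction n arbitrary: i j a)
  case 0
  have e: "{0<..<Suc 0} = ({}::nat set)" by auto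
  from 0 show ?case by (simp add: LL_def e)
next
  case (Suc n)
  let ?m = "2^n::nat"
  let ?hL = "grow n (iL n i)" and ?hU = "grow n (iU n i)"
  show ?case
  proof (cases "j < ?m")
    case True
    have A: "wm (Suc n) (grow (Suc n) i) (grow (Suc n) j) = wm n ?hL (grow n j)"
    proof -
      have "wm n ?hU (\<lambda>c. grow (Suc n) j (c+?m)) = 0"
        unfolding wm_def by (rule sum.neutral) (use \<open>j < 2^n\<close> in \<open>auto simp: grow_high grow_zero\<close>)
      moreover have "wm n ?hL (grow (Suc n) j) = wm n ?hL (grow n j)"
        by (rule wm_cong) (use \<open>j < 2^n\<close> in \<open>simp add: grow_low\<close>)
      ultimately show ?thesis unfolding wm_mask by simp
    qed
    have B: "wm (Suc n) (grow (Suc n) i) (LL (Suc n) j a) = wm n ?hL (\<lambda>c. LL n j a c + TT n a c) + wm n ?hU (TT n a)"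
      unfolding wm_mask
      by (intro arg_cong2[where f="(+)"] wm_cong) (use \<open>j < 2^n\<close> in \<open>simp_all add: D1a D1b\<close>)
    have "wm n ?hL (LL n j a) \<le> wm n ?hL (\<lambda>c. LL n j a c + TT n a c) + wm n ?hU (TT n a)"
      unfolding wm_def sum.distrib[symmetric]
      by (rule sum_mono) (rule bitpt1, simp add: mask_sub)
    then show ?thesis using Suc.IH[OF \<open>j < 2^n\<close>, of "iL n i" a] A B by simp
  next
    case False
    then have j1: "?m \<le> j" "j < 2^Suc n" using Suc.prems by auto
    have jm: "j mod ?m = j - ?m" using j1 by (simp add: le_mod_geq)
    have j2: "j - ?m < ?m" using j1 by simp
    have A: "wm (Suc n) (grow (Suc n) i) (grow (Suc n) j) = wm n ?hL (grow n (j-?m)) + wm n ?hU (grow n (j-?m))"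
      unfolding wm_mask
      by (intro arg_cong2[where f="(+)"] wm_cong) (use j1 jm in \<open>simp_all add: grow_low grow_high\<close>)
    have B: "wm (Suc n) (grow (Suc n) i) (LL (Suc n) j a) = wm n ?hL (LL n (j-?m) (\<lambda>k. a (k+?m))) + wm n ?hU (LL n (j-?m) (\<lambda>k. a (k+?m)))"
      unfolding wm_mask
      by (intro arg_cong2[where f="(+)"] wm_cong) (simp_all add: D2[OF j1])
    show ?thesis unfolding A B
      by (intro add_mono Suc.IH j2)
  qed
qed

lemma bitpt2: "of_bool (x + u \<noteq> 0) \<le> of_bool (x + (u + t) \<noteq> 0) + (of_bool (t \<noteq> 0) :: nat)"
  for x u t :: bit
  by (cases x; cases u; cases t) auto

lemma bitid: "of_bool (x + t \<noteq> 0) + of_bool (t \<noteq> 0) = of_bool (x \<noteq> 0) + 2 * (of_bool (t \<noteq> 0 \<and> x = 0) :: nat)"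
  for x t :: bit
  by (cases x; cases t) auto

lemma ww_id: "ww n (\<lambda>c. x c + t c) + ww n t = ww n x + 2 * wm n x t"
  unfolding ww_def wm_def sum.distrib[symmetric] sum_distrib_left
  by (rule sum.cong) (simp_all only: bitid)

lemma P: "i < j \<Longrightarrow> j < 2^n \<Longrightarrow> ww n (\<lambda>c. grow n i c + grow n j c) \<le> ww n (\<lambda>c. grow n i c + LL n j a c)"
proof (induction n arbitrary: i j a)
  case 0
  then show ?case by simp
next
  case (Suc n)
  let ?m = "2^n::nat"
  have j1: "j < 2*?m" using Suc.prems by simp
  consider "?m \<le> i" | "j < ?m" | "i < ?m \<and> ?m \<le> j" by linarith
  then show ?case
  proof cases
    case 1
    then have ij: "?m \<le> j" "j < 2^Suc n" using Suc.prems by auto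
    have im: "i mod ?m = i - ?m" "j mod ?m = j - ?m" using 1 ij j1 Suc.prems by (simp_all add: le_mod_geq)
    have lt: "i - ?m < j - ?m" "j - ?m < ?m" using 1 Suc.prems j1 by auto
    have A: "ww (Suc n) (\<lambda>c. grow (Suc n) i c + grow (Suc n) j c)
       = ww n (\<lambda>c. grow n (i-?m) c + grow n (j-?m) c) + ww n (\<lambda>c. grow n (i-?m) c + grow n (j-?m) c)"
      unfolding ww_split
      by (intro arg_cong2[where f="(+)"] ww_cong) (use 1 ij j1 im Suc.prems in \<open>simp_all add: grow_low grow_high\<close>)
    have B: "ww (Suc n) (\<lambda>c. grow (Suc n) i c + LL (Suc n) j a c)
       = ww n (\<lambda>c. grow n (i-?m) c + LL n (j-?m) (\<lambda>k. a (k+?m)) c) + ww n (\<lambda>c. grow n (i-?m) c + LL n (j-?m) (\<lambda>k. a (k+?m)) c)"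
      unfolding ww_split
      by (intro arg_cong2[where f="(+)"] ww_cong) (use 1 ij j1 im Suc.prems in \<open>simp_all add: grow_low grow_high D2[OF ij]\<close>)
    show ?thesis unfolding A B by (intro add_mono Suc.IH lt)
  next
    case 2
    have A: "ww (Suc n) (\<lambda>c. grow (Suc n) i c + grow (Suc n) j c) = ww n (\<lambda>c. grow n i c + grow n j c)"
    proof -
      have "ww n (\<lambda>c. grow (Suc n) i (c+?m) + grow (Suc n) j (c+?m)) = 0"
        unfolding ww_def by (rule sum.neutral) (use 2 Suc.prems in \<open>auto simp: grow_high grow_zero\<close>)
      moreover have "ww n (\<lambda>c. grow (Suc n) i c + grow (Suc n) j c) = ww n (\<lambda>c. grow n i c + grow n j c)"
        by (rule ww_cong) (use 2 Suc.prems in \<open>simp add: grow_low\<close>)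
      ultimately show ?thesis unfolding ww_split by simp
    qed
    have B: "ww (Suc n) (\<lambda>c. grow (Suc n) i c + LL (Suc n) j a c)
       = ww n (\<lambda>c. grow n i c + (LL n j a c + TT n a c)) + ww n (TT n a)"
      unfolding ww_split
      by (intro arg_cong2[where f="(+)"] ww_cong) (use 2 Suc.prems in \<open>simp_all add: grow_low grow_high grow_zero D1a D1b\<close>)
    have "ww n (\<lambda>c. grow n i c + LL n j a c) \<le> ww n (\<lambda>c. grow n i c + (LL n j a c + TT n a c)) + ww n (TT n a)"
      unfolding ww_def sum.distrib[symmetric] by (rule sum_mono) (rule bitpt2)
    then show ?thesis using Suc.IH[OF Suc.prems(1) 2, of a] A B by simp
  next
    case 3
    then have ij: "?m \<le> j" "j < 2^Suc n" using Suc.prems by auto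
    have im: "j mod ?m = j - ?m" using ij j1 by (simp add: le_mod_geq)
    have lt: "j - ?m < ?m" using ij j1 by auto
    let ?L = "LL n (j-?m) (\<lambda>k. a (k+?m))"
    have A: "ww (Suc n) (\<lambda>c. grow (Suc n) i c + grow (Suc n) j c)
       = ww n (\<lambda>c. grow n i c + grow n (j-?m) c) + ww n (grow n (j-?m))"
      unfolding ww_split
      by (intro arg_cong2[where f="(+)"] ww_cong) (use 3 ij j1 im in \<open>simp_all add: grow_low grow_high grow_zero\<close>)
    have B: "ww (Suc n) (\<lambda>c. grow (Suc n) i c + LL (Suc n) j a c)
       = ww n (\<lambda>c. grow n i c + ?L c) + ww n ?L"
      unfolding ww_split
      by (intro arg_cong2[where f="(+)"] ww_cong) (use 3 ij j1 in \<open>simp_all add: grow_low grow_high grow_zero D2[OF ij]\<close>)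
    have "wm n (grow n i) (grow n (j-?m)) \<le> wm n (grow n i) ?L" by (rule W[OF lt])
    then show ?thesis unfolding A B using ww_id[of n "grow n i" "grow n (j-?m)"] ww_id[of n "grow n i" ?L] by simp
  qed
qed

definition cc :: "nat \<Rightarrow> nat \<Rightarrow> nat \<Rightarrow> nat" where
  "cc n i j = (\<Sum>c<2^n. of_bool (grow n i c \<noteq> 0 \<and> grow n j c \<noteq> 0))"

lemma tij_Suc: "tij (Suc n) i j = tij n (i mod 2^n) (j mod 2^n) + bitk n i * bitk n j"
  unfolding tij_def by (simp add: bitk_mod)

lemma bitk_top: "i < 2*2^n \<Longrightarrow> bitk n i = (if 2^n \<le> i then 1 else 0)"
proof -
  assume "i < 2*2^n"
  then have "i div 2^n < 2" by (simp add: less_mult_imp_div_less)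
  moreover have "2^n \<le> i \<longleftrightarrow> 1 \<le> i div 2^n" by (metis One_nat_def Suc_le_eq div_greater_zero_iff zero_less_numeral zero_less_power)
  ultimately show ?thesis unfolding bitk_def by auto
qed

lemma cc_pow: "i < 2^n \<Longrightarrow> j < 2^n \<Longrightarrow> cc n i j = 2^(tij n i j)"
proof (induction n arbitrary: i j)
  case 0
  then show ?case by (simp add: cc_def tij_def grow_def)
next
  case (Suc n)
  let ?m = "2^n::nat"
  have p: "(2::nat)^Suc n = ?m + ?m" by simp
  have i1: "i < 2*?m" "j < 2*?m" using Suc.prems by auto
  have spl: "cc (Suc n) i j = cc n (i mod ?m) (j mod ?m) + (\<Sum>c<?m. of_bool (grow (Suc n) i (c+?m) \<noteq> 0 \<and> grow (Suc n) j (c+?m) \<noteq> 0))"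
    unfolding cc_def p sum_split
    by (intro arg_cong2[where f="(+)"] sum.cong) (use i1 in \<open>simp_all add: grow_low\<close>)
  have mlt: "i mod ?m < ?m" "j mod ?m < ?m" by simp_all
  show ?case
  proof (cases "?m \<le> i \<and> ?m \<le> j")
    case True
    then have im: "i mod ?m = i - ?m" "j mod ?m = j - ?m" using i1 by (simp_all add: le_mod_geq)
    have "(\<Sum>c<?m. of_bool (grow (Suc n) i (c+?m) \<noteq> 0 \<and> grow (Suc n) j (c+?m) \<noteq> 0)) = cc n (i mod ?m) (j mod ?m)"
      unfolding cc_def im by (rule sum.cong) (use True in \<open>simp_all add: grow_high\<close>)
    moreover have "bitk n i * bitk n j = 1" using True i1 by (simp add: bitk_top)
    ultimately show ?thesis unfolding spl tij_Suc Suc.IH[OF mlt] by simp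
  next
    case False
    have z: "(\<Sum>c<?m. of_bool (grow (Suc n) i (c+?m) \<noteq> 0 \<and> grow (Suc n) j (c+?m) \<noteq> 0)) = 0"
      by (rule sum.neutral) (use False in \<open>auto simp: grow_high grow_zero\<close>)
    have b: "bitk n i * bitk n j = 0" using False i1 by (auto simp: bitk_top)
    show ?thesis unfolding spl tij_Suc Suc.IH[OF mlt] z b by simp
  qed
qed

lemma bitid2: "of_bool (x + y \<noteq> 0) + 2 * of_bool (x \<noteq> 0 \<and> y \<noteq> 0) = of_bool (x \<noteq> 0) + (of_bool (y \<noteq> 0) :: nat)"
  for x y :: bit
  by (cases x; cases y) auto

lemma ww_id2: "ww n (\<lambda>c. grow n i c + grow n j c) + 2 * cc n i j = ww n (grow n i) + ww n (grow n j)"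
  unfolding ww_def cc_def sum.distrib[symmetric] sum_distrib_left
  by (rule sum.cong) (simp_all only: bitid2)

lemma hw_ww: "hw n x = ww n x"
  unfolding hw_def ww_def card_sum ..

theorem theorem5:
  fixes n i j :: nat
  assumes "i < j" and "j < 2^n"
  shows "(\<forall>x \<in> cosetC n i j. hw n x \<ge> hw n (\<lambda>c. grow n i c + grow n j c))
    \<and> int (hw n (\<lambda>c. grow n i c + grow n j c))
        = int (hw n (grow n i)) + int (hw n (grow n j)) - 2 ^ (tij n i j + 1)"
proof
  show "\<forall>x \<in> cosetC n i j. hw n x \<ge> hw n (\<lambda>c. grow n i c + grow n j c)"
  proof
    fix x assume "x \<in> cosetC n i j"
    then obtain a where x: "x = (\<lambda>c. grow n i c + grow n j c + (\<Sum>k\<in>{j+1..<2^n}. a k * grow n k c))"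
      unfolding cosetC_def gf2_span_def by blast
    have e: "{j+1..<2^n} = {j<..<(2::nat)^n}" by auto
    have "x = (\<lambda>c. grow n i c + LL n j a c)" unfolding x LL_def e by (simp only: add.assoc)
    then show "hw n x \<ge> hw n (\<lambda>c. grow n i c + grow n j c)"
      unfolding hw_ww using P[OF assms] by simp
  qed
next
  have "i < 2^n" using assms by simp
  have "ww n (\<lambda>c. grow n i c + grow n j c) + 2 * 2^(tij n i j) = ww n (grow n i) + ww n (grow n j)"
    using ww_id2[of n i j] cc_pow[OF \<open>i < 2^n\<close> assms(2)] by simp
  then have "int (ww n (\<lambda>c. grow n i c + grow n j c)) + 2 * 2^(tij n i j) = int (ww n (grow n i)) + int (ww n (grow n j))"
    by (metis (mono_tags) of_nat_add of_nat_mult of_nat_numeral of_nat_power)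
  then show "int (hw n (\<lambda>c. grow n i c + grow n j c))
        = int (hw n (grow n i)) + int (hw n (grow n j)) - 2 ^ (tij n i j + 1)"
    unfolding hw_ww by simp
qed

end
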